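(* Let $0,1,\dots,9$ be points of $\mathbb{P}^3(\mathbb{C})$ with fixed representative vectors. Assume that (i) the vector space of quadratic forms vanishing at the six points $0,\dots,5$ has dimension $4$, and (ii) $[0125][0234][1345]-[0124][2345][0135]\neq 0$. Let $M$ be the $4\times 4$ matrix whose row indexed by $j\in\{6,7,8,9\}$ is $$\big([015j][234j],\ [012j][345j],\ [024j][135j],\ [045j][123j]\big).$$ Then the ten points lie on a common quadric surface (the zero set of a nonzero quadratic form) if and only if $\det M=0$.
   Context: $[abcd]$ denotes the determinant of the $4\times4$ matrix whose columns are the chosen representative vectors of the points $a,b,c,d$. A quadric surface is the zero locus in $\mathbb{P}^3$ of a nonzero homogeneous polynomial of degree $2$ in four variables. *)

theory Defs
  imports "HOL-Analysis.Analysis"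
begin

text \<open>A quadratic form in four variables x_1..x_4 is represented by its coefficient function
  q :: complex^4^4, where q$i$j (for i <= j) is the coefficient of the monomial x_i x_j;
  coefficients with i > j are required to be zero (they are not part of the form).\<close>

definition bracket :: "complex^4 \<Rightarrow> complex^4 \<Rightarrow> complex^4 \<Rightarrow> complex^4 \<Rightarrow> complex" where
  "bracket a b c d = det (transpose (vector [a, b, c, d] :: complex^4^4))"

definition is_qcoeff :: "(complex^4^4) \<Rightarrow> bool" where
  "is_qcoeff q \<longleftrightarrow> (\<forall>i j. \<not> i \<le> j \<longrightarrow> q$i$j = 0)"

definition qeval :: "(complex^4^4) \<Rightarrow> complex^4 \<Rightarrow> complex" where
  "qeval q v = (\<Sum>i\<in>UNIV. \<Sum>j\<in>UNIV. if i \<le> j then q$i$j * v$i * v$j else 0)"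

definition qscale :: "complex \<Rightarrow> (complex^4^4) \<Rightarrow> (complex^4^4)" where
  "qscale c q = (\<chi> i j. c * q$i$j)"

definition quads_through :: "(complex^4) set \<Rightarrow> (complex^4^4) set" where
  "quads_through P = {q. is_qcoeff q \<and> (\<forall>v\<in>P. qeval q v = 0)}"

definition on_common_quadric :: "(complex^4) set \<Rightarrow> bool" where
  "on_common_quadric P \<longleftrightarrow> (\<exists>q\<in>quads_through P. \<exists>i j. i \<le> j \<and> q$i$j \<noteq> 0)"

definition mrow :: "(nat \<Rightarrow> complex^4) \<Rightarrow> nat \<Rightarrow> complex^4" where
  "mrow p j = vector [bracket (p 0) (p 1) (p 5) (p j) * bracket (p 2) (p 3) (p 4) (p j),
                      bracket (p 0) (p 1) (p 2) (p j) * bracket (p 3) (p 4) (p 5) (p j),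
                      bracket (p 0) (p 2) (p 4) (p j) * bracket (p 1) (p 3) (p 5) (p j),
                      bracket (p 0) (p 4) (p 5) (p j) * bracket (p 1) (p 2) (p 3) (p j)]"

definition matM :: "(nat \<Rightarrow> complex^4) \<Rightarrow> complex^4^4" where
  "matM p = vector [mrow p 6, mrow p 7, mrow p 8, mrow p 9]"

end

theory Submission imports Defs begin


lemma det_4:
  "det (A::'a::comm_ring_1^4^4) =
    (\<Sum>p\<in>{p. p permutes (UNIV::4 set)}. of_int (sign p) * A$1$p 1 * A$2$p 2 * A$3$p 3 * A$4$p 4)"
  unfolding det_def UNIV_4 by (simp add: mult.assoc)

lemma det_4x:
  "det (A::'a::comm_ring_1^4^4) = 
 A$1$1*A$2$2*A$3$3*A$4$4 - A$1$1*A$2$2*A$3$4*A$4$3 - A$1$1*A$2$3*A$3$2*A$4$4 + A$1$1*A$2$3*A$3$4*A$4$2 + A$1$1*A$2$4*A$3$2*A$4$3 - A$1$1*A$2$4*A$3$3*A$4$2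
 - A$1$2*A$2$1*A$3$3*A$4$4 + A$1$2*A$2$1*A$3$4*A$4$3 + A$1$2*A$2$3*A$3$1*A$4$4 - A$1$2*A$2$3*A$3$4*A$4$1 - A$1$2*A$2$4*A$3$1*A$4$3 + A$1$2*A$2$4*A$3$3*A$4$1
 + A$1$3*A$2$1*A$3$2*A$4$4 - A$1$3*A$2$1*A$3$4*A$4$2 - A$1$3*A$2$2*A$3$1*A$4$4 + A$1$3*A$2$2*A$3$4*A$4$1 + A$1$3*A$2$4*A$3$1*A$4$2 - A$1$3*A$2$4*A$3$2*A$4$1
 - A$1$4*A$2$1*A$3$2*A$4$3 + A$1$4*A$2$1*A$3$3*A$4$2 + A$1$4*A$2$2*A$3$1*A$4$3 - A$1$4*A$2$2*A$3$3*A$4$1 - A$1$4*A$2$3*A$3$1*A$4$2 + A$1$4*A$2$3*A$3$2*A$4$1"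
proof -
  have f1: "finite {2::4, 3, 4}" "1 \<notin> {2::4, 3, 4}" by auto
  have f2: "finite {3::4, 4}" "2 \<notin> {3::4, 4}" by auto
  have f3: "finite {4::4}" "3 \<notin> {4::4}" by auto
  show ?thesis
    unfolding det_def UNIV_4
    unfolding sum_over_permutations_insert[OF f1]
    unfolding sum_over_permutations_insert[OF f2]
    unfolding sum_over_permutations_insert[OF f3]
    unfolding permutes_sing
    by (simp add: sign_swap_id permutation_swap_id sign_compose permutation_compose sign_id swap_id_eq algebra_simps)
qed

lemma vector_4 [simp]:
 "(vector [x,y,z,w] ::('a::zero)^4)$1 = x"
 "(vector [x,y,z,w] ::('a::zero)^4)$2 = y"
 "(vector [x,y,z,w] ::('a::zero)^4)$3 = z"
 "(vector [x,y,z,w] ::('a::zero)^4)$4 = w"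
  unfolding vector_def by simp_all

lemma bracket_x: "bracket a b c d =
 a$1*b$2*c$3*d$4 - a$1*b$2*c$4*d$3 - a$1*b$3*c$2*d$4 + a$1*b$3*c$4*d$2 + a$1*b$4*c$2*d$3 - a$1*b$4*c$3*d$2
 - a$2*b$1*c$3*d$4 + a$2*b$1*c$4*d$3 + a$2*b$3*c$1*d$4 - a$2*b$3*c$4*d$1 - a$2*b$4*c$1*d$3 + a$2*b$4*c$3*d$1
 + a$3*b$1*c$2*d$4 - a$3*b$1*c$4*d$2 - a$3*b$2*c$1*d$4 + a$3*b$2*c$4*d$1 + a$3*b$4*c$1*d$2 - a$3*b$4*c$2*d$1
 - a$4*b$1*c$2*d$3 + a$4*b$1*c$3*d$2 + a$4*b$2*c$1*d$3 - a$4*b$2*c$3*d$1 - a$4*b$3*c$1*d$2 + a$4*b$3*c$2*d$1" (is "_ = ?rhs")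
proof -
  have "bracket a b c d = det (vector [a,b,c,d] :: complex^4^4)" by (simp add: bracket_def)
  also have "\<dots> = ?rhs" by (subst det_4x) simp
  finally show ?thesis .
qed

lemma br_add[simp]: "bracket a b c (x + y) = bracket a b c x + bracket a b c y"
  unfolding bracket_x by (simp add: algebra_simps)

lemma br_zero[simp]: "bracket a a c d = 0" "bracket a b a d = 0" "bracket a b c a = 0"
  "bracket a b b d = 0" "bracket a b c b = 0" "bracket a b c c = 0"
  unfolding bracket_x by (simp_all add: algebra_simps)

lemma sw12: "bracket b a c d = - bracket a b c d" unfolding bracket_x by (simp add: algebra_simps)
lemma sw23: "bracket a c b d = - bracket a b c d" unfolding bracket_x by (simp add: algebra_simps)
lemma sw34: "bracket a b d c = - bracket a b c d" unfolding bracket_x by (simp add: algebra_simps)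

definition lf :: "complex^4 \<Rightarrow> complex^4 \<Rightarrow> complex^4 \<Rightarrow> complex^4" where
  "lf a b c = (\<chi> k. bracket a b c (axis k 1))"

lemma br_lin: "bracket a b c v = (\<Sum>k\<in>UNIV. lf a b c $ k * v $ k)"
  unfolding lf_def sum_4 by (simp add: bracket_x axis_def algebra_simps)

definition qprod :: "complex^4 \<Rightarrow> complex^4 \<Rightarrow> complex^4^4" where
  "qprod l m = (\<chi> i j. if i < j then l$i*m$j + l$j*m$i else if i = j then l$i*m$i else 0)"

lemma qeval_qprod: "qeval (qprod l m) v = (\<Sum>k\<in>UNIV. l$k * v$k) * (\<Sum>k\<in>UNIV. m$k * v$k)"
  unfolding qeval_def qprod_def sum_4 by (simp add: less_eq_bit0_def less_bit0_def bit0.Rep_numeral bit0.Rep_1 algebra_simps)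

lemma qeval_lin4: "qeval (\<chi> i j. a*A$i$j + b*B$i$j + c*C$i$j + d*D$i$j) v
   = a*qeval A v + b*qeval B v + c*qeval C v + d*qeval D v"
  unfolding qeval_def sum_4 by (simp add: algebra_simps)

lemma det0_iff: "det (A::complex^4^4) = 0 \<longleftrightarrow> (\<exists>x. x \<noteq> 0 \<and> A *v x = 0)"
  using invertible_det_nz[of A] invertible_left_inverse[of A] matrix_left_invertible_ker[of A] by blast

lemma GP: "bracket e f a b * bracket e f c d - bracket e f a c * bracket e f b d + bracket e f a d * bracket e f b c = 0"
  unfolding bracket_x by algebra

definition Q1 :: "(nat \<Rightarrow> complex^4) \<Rightarrow> complex^4^4" where
  "Q1 p = qprod (lf (p 0) (p 1) (p 5)) (lf (p 2) (p 3) (p 4))"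
definition Q2 :: "(nat \<Rightarrow> complex^4) \<Rightarrow> complex^4^4" where
  "Q2 p = qprod (lf (p 0) (p 1) (p 2)) (lf (p 3) (p 4) (p 5))"
definition Q3 :: "(nat \<Rightarrow> complex^4) \<Rightarrow> complex^4^4" where
  "Q3 p = qprod (lf (p 0) (p 2) (p 4)) (lf (p 1) (p 3) (p 5))"
definition Q4 :: "(nat \<Rightarrow> complex^4) \<Rightarrow> complex^4^4" where
  "Q4 p = qprod (lf (p 0) (p 4) (p 5)) (lf (p 1) (p 2) (p 3))"

lemma qeval_Q1: "qeval (Q1 p) v = bracket (p 0) (p 1) (p 5) v * bracket (p 2) (p 3) (p 4) v"
  by (simp add: Q1_def qeval_qprod br_lin)
lemma qeval_Q2: "qeval (Q2 p) v = bracket (p 0) (p 1) (p 2) v * bracket (p 3) (p 4) (p 5) v"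
  by (simp add: Q2_def qeval_qprod br_lin)
lemma qeval_Q3: "qeval (Q3 p) v = bracket (p 0) (p 2) (p 4) v * bracket (p 1) (p 3) (p 5) v"
  by (simp add: Q3_def qeval_qprod br_lin)
lemma qeval_Q4: "qeval (Q4 p) v = bracket (p 0) (p 4) (p 5) v * bracket (p 1) (p 2) (p 3) v"
  by (simp add: Q4_def qeval_qprod br_lin)

definition QQ :: "(nat \<Rightarrow> complex^4) \<Rightarrow> complex^4 \<Rightarrow> complex^4^4" where
  "QQ p c = (\<chi> i j. c$1 * Q1 p$i$j + c$2 * Q2 p$i$j + c$3 * Q3 p$i$j + c$4 * Q4 p$i$j)"

lemma qeval_QQ: "qeval (QQ p c) v =
   c$1 * (bracket (p 0) (p 1) (p 5) v * bracket (p 2) (p 3) (p 4) v)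
 + c$2 * (bracket (p 0) (p 1) (p 2) v * bracket (p 3) (p 4) (p 5) v)
 + c$3 * (bracket (p 0) (p 2) (p 4) v * bracket (p 1) (p 3) (p 5) v)
 + c$4 * (bracket (p 0) (p 4) (p 5) v * bracket (p 1) (p 2) (p 3) v)"
  unfolding QQ_def qeval_lin4 qeval_Q1 qeval_Q2 qeval_Q3 qeval_Q4 ..

lemma qcoeff_qprod: "is_qcoeff (qprod l m)"
  by (auto simp add: is_qcoeff_def qprod_def)

lemma qcoeff_QQ: "is_qcoeff (QQ p c)"
  using qcoeff_qprod unfolding is_qcoeff_def QQ_def Q1_def Q2_def Q3_def Q4_def by simp

lemma qeval_zero: "qeval 0 v = 0" unfolding qeval_def by (intro sum.neutral ballI) simp

lemma cert:
  fixes B0123 B0124 B0125 B0134 B0135 B0145 B0234 B0235 B0245 B0345 B1234 B1235 B1245 B1345 B2345 c1 c2 c3 c4 :: complex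
  assumes r0: "- B0123*B0145*c4 - B0124*B0135*c3 = 0"
    and r1: "- B0123*B0245*c4 + B0125*B0234*c1 = 0"
    and r2: "- B0123*B0345*c2 - B0123*B0345*c4 + B0135*B0234*c1 + B0135*B0234*c3 = 0"
    and r3: "- B0124*B0345*c2 + B0145*B0234*c1 = 0"
    and r4: "- B0125*B0345*c2 - B0135*B0245*c3 = 0"
    and r5: "B0124*B1235*c3 + B0125*B1234*c1 = 0"
    and r6: "- B0123*B1345*c2 + B0135*B1234*c1 = 0"
    and r7: "- B0124*B1345*c2 - B0124*B1345*c3 + B0145*B1234*c1 + B0145*B1234*c4 = 0"
    and r8: "- B0125*B1345*c2 + B0145*B1235*c4 = 0"
    and r9: "- B0123*B2345*c2 - B0234*B1235*c3 = 0"
    and r10: "- B0124*B2345*c2 + B0245*B1234*c4 = 0"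
    and r11: "- B0125*B2345*c1 - B0125*B2345*c2 + B0245*B1235*c3 + B0245*B1235*c4 = 0"
    and r12: "B0234*B1345*c3 + B0345*B1234*c4 = 0"
    and r13: "- B0135*B2345*c1 + B0345*B1235*c4 = 0"
    and r14: "- B0145*B2345*c1 - B0245*B1345*c3 = 0"
    and pl0: "B0123*B0145 - B0124*B0135 + B0125*B0134 = 0"
    and pl1: "- B0123*B0245 + B0124*B0235 - B0125*B0234 = 0"
    and pl2: "B0123*B0345 - B0134*B0235 + B0135*B0234 = 0"
    and pl3: "- B0124*B0345 + B0134*B0245 - B0145*B0234 = 0"
    and pl4: "B0125*B0345 - B0135*B0245 + B0145*B0235 = 0"
    and pl5: "B0123*B1245 - B0124*B1235 + B0125*B1234 = 0"
    and pl6: "- B0123*B1345 + B0134*B1235 - B0135*B1234 = 0"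
    and pl7: "B0124*B1345 - B0134*B1245 + B0145*B1234 = 0"
    and pl8: "- B0125*B1345 + B0135*B1245 - B0145*B1235 = 0"
    and pl9: "B0123*B2345 - B0234*B1235 + B0235*B1234 = 0"
    and pl10: "- B0124*B2345 + B0234*B1245 - B0245*B1234 = 0"
    and pl11: "B0125*B2345 - B0235*B1245 + B0245*B1235 = 0"
    and pl12: "B0134*B2345 - B0234*B1345 + B0345*B1234 = 0"
    and pl13: "- B0135*B2345 + B0235*B1345 - B0345*B1235 = 0"
    and pl14: "B0145*B2345 - B0245*B1345 + B0345*B1245 = 0"
    and g: "B0125*B0234*B1345 - B0124*B2345*B0135 \<noteq> 0"
  shows "c1 = 0 \<and> c2 = 0 \<and> c3 = 0 \<and> c4 = 0"
proof -
  have e0: "2 * (B0125*B0234*B1345 - B0124*B2345*B0135) * c1 = (c1*B2345 + c2*B2345) * (B0123*B0145 - B0124*B0135 + B0125*B0134) + (- c2*B1345 - c3*B1345) * (- B0123*B0245 + B0124*B0235 - B0125*B0234) + (- c3*B1235 + c4*B1235) * (- B0124*B0345 + B0134*B0245 - B0145*B0234) + (c1*B1234 + c4*B1234) * (B0125*B0345 - B0135*B0245 + B0145*B0235) + ((-2)*c4*B0245) * (- B0123*B1345 + B0134*B1235 - B0135*B1234) + ((2)*B1345) * (- B0123*B0245*c4 + B0125*B0234*c1) + (- B0345) * (B0124*B1235*c3 + B0125*B1234*c1) + (B0245) * (- B0123*B1345*c2 + B0135*B1234*c1) + (- B0235) * (- B0124*B1345*c2 - B0124*B1345*c3 + B0145*B1234*c1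 + B0145*B1234*c4) + (B0234) * (- B0125*B1345*c2 + B0145*B1235*c4) + (B0145) * (- B0123*B2345*c2 - B0234*B1235*c3) + (- B0135) * (- B0124*B2345*c2 + B0245*B1234*c4) + (B0134) * (- B0125*B2345*c1 - B0125*B2345*c2 + B0245*B1235*c3 + B0245*B1235*c4) + (- B0125) * (B0234*B1345*c3 + B0345*B1234*c4) + (B0124) * (- B0135*B2345*c1 + B0345*B1235*c4) + (B0123) * (- B0145*B2345*c1 - B0245*B1345*c3)"
    by algebra
  have z0: "2 * (B0125*B0234*B1345 - B0124*B2345*B0135) * c1 = 0"
    unfolding e0 by (simp only: pl0 pl1 pl3 pl4 pl6 r1 r5 r6 r7 r8 r9 r10 r11 r12 r13 r14) simp
  have e1: "2 * (B0125*B0234*B1345 - B0124*B2345*B0135) * c2 = (c1*B2345 + c2*B2345) * (B0123*B0145 - B0124*B0135 + B0125*B0134) + (- c2*B1345 - c3*B1345) * (- B0123*B0245 + B0124*B0235 - B0125*B0234) + (- c3*B1235 - c4*B1235) * (- B0124*B0345 + B0134*B0245 - B0145*B0234) + (c1*B1234 + c4*B1234) * (B0125*B0345 - B0135*B0245 + B0145*B0235) + (- B0345) * (B0124*B1235*c3 + B0125*B1234*c1) + (B0245) * (- B0123*B1345*c2 + B0135*B1234*c1) + (- B0235) * (- B0124*B1345*c2 - B0124*B1345*c3 + B0145*B1234*c1 + B0145*B1234*c4) + (- B0234) * (- B0125*B1345*c2 + B0145*B1235*c4) + (B0145) * (- B0123*B2345*c2 - B0234*B1235*c3) + (B0135) *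 (- B0124*B2345*c2 + B0245*B1234*c4) + (B0134) * (- B0125*B2345*c1 - B0125*B2345*c2 + B0245*B1235*c3 + B0245*B1235*c4) + (- B0125) * (B0234*B1345*c3 + B0345*B1234*c4) + (- B0124) * (- B0135*B2345*c1 + B0345*B1235*c4) + (B0123) * (- B0145*B2345*c1 - B0245*B1345*c3)"
    by algebra
  have z1: "2 * (B0125*B0234*B1345 - B0124*B2345*B0135) * c2 = 0"
    unfolding e1 by (simp only: pl0 pl1 pl3 pl4 r5 r6 r7 r8 r9 r10 r11 r12 r13 r14) simp
  have e2: "2 * (B0125*B0234*B1345 - B0124*B2345*B0135) * c3 = (c1*B2345 + c2*B2345) * (B0123*B0145 - B0124*B0135 + B0125*B0134) + (- c2*B1345 - c3*B1345) * (- B0123*B0245 + B0124*B0235 - B0125*B0234) + (- c3*B1235 - c4*B1235) * (- B0124*B0345 + B0134*B0245 - B0145*B0234) + (c1*B1234 - c4*B1234) * (B0125*B0345 - B0135*B0245 + B0145*B0235) + ((2)*c4*B0145) * (B0123*B2345 - B0234*B1235 + B0235*B1234) + ((2)*B2345) * (- B0123*B0145*c4 - B0124*B0135*c3) + (- B0345) * (B0124*B1235*c3 + B0125*B1234*c1) + (B0245) * (- B0123*B1345*c2 + B0135*B1234*c1) + (- B0235) * (- B0124*B1345*c2 - B0124*B1345*c3 + B0145*B1234*c1 + B0145*B1234*c4) + (B0234) * (- B0125*B1345*c2 + B0145*B1235*c4) + (B0145) * (- B0123*B2345*c2 - B0234*B1235*c3) + (- B0135) * (- B0124*B2345*c2 +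 B0245*B1234*c4) + (B0134) * (- B0125*B2345*c1 - B0125*B2345*c2 + B0245*B1235*c3 + B0245*B1235*c4) + (B0125) * (B0234*B1345*c3 + B0345*B1234*c4) + (- B0124) * (- B0135*B2345*c1 + B0345*B1235*c4) + (B0123) * (- B0145*B2345*c1 - B0245*B1345*c3)"
    by algebra
  have z2: "2 * (B0125*B0234*B1345 - B0124*B2345*B0135) * c3 = 0"
    unfolding e2 by (simp only: pl0 pl1 pl3 pl4 pl9 r0 r5 r6 r7 r8 r9 r10 r11 r12 r13 r14) simp
  have e3: "2 * (B0125*B0234*B1345 - B0124*B2345*B0135) * c4 = (- c1*B2345 - c2*B2345) * (B0123*B0145 - B0124*B0135 + B0125*B0134) + (c2*B1345 + c3*B1345 + (-2)*c4*B1345) * (- B0123*B0245 + B0124*B0235 - B0125*B0234) + ((-2)*c4*B1245) * (B0123*B0345 - B0134*B0235 + B0135*B0234) + (c3*B1235 - c4*B1235) * (- B0124*B0345 + B0134*B0245 - B0145*B0234) + (- c1*B1234 + (-3)*c4*B1234) * (B0125*B0345 - B0135*B0245 + B0145*B0235) + ((2)*c4*B0345) * (B0123*B1245 - B0124*B1235 + B0125*B1234) + ((2)*c4*B0245) * (- B0123*B1345 + B0134*B1235 - B0135*B1234) + ((2)*c4*B0235) * (B0124*B1345 - B0134*B1245 + B0145*B1234) + ((2)*c4*B0135) * (- B0124*B2345 + B0234*B1245 - B0245*B1234) + (B0345) * (B0124*B1235*c3 + B0125*B1234*c1) + (- B0245) * (- B0123*B1345*c2 + B0135*B1234*c1) +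 (B0235) * (- B0124*B1345*c2 - B0124*B1345*c3 + B0145*B1234*c1 + B0145*B1234*c4) + (- B0234) * (- B0125*B1345*c2 + B0145*B1235*c4) + (- B0145) * (- B0123*B2345*c2 - B0234*B1235*c3) + (B0135) * (- B0124*B2345*c2 + B0245*B1234*c4) + (- B0134) * (- B0125*B2345*c1 - B0125*B2345*c2 + B0245*B1235*c3 + B0245*B1235*c4) + (B0125) * (B0234*B1345*c3 + B0345*B1234*c4) + (B0124) * (- B0135*B2345*c1 + B0345*B1235*c4) + (- B0123) * (- B0145*B2345*c1 - B0245*B1345*c3)"
    by algebra
  have z3: "2 * (B0125*B0234*B1345 - B0124*B2345*B0135) * c4 = 0"
    unfolding e3 by (simp only: pl0 pl1 pl2 pl3 pl4 pl5 pl6 pl7 pl10 r5 r6 r7 r8 r9 r10 r11 r12 r13 r14) simp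
  show ?thesis using z0 z1 z2 z3 g by simp
qed


lemma QQ_indep:
  fixes p :: "nat \<Rightarrow> complex^4" and c :: "complex^4"
  assumes gen: "bracket (p 0) (p 1) (p 2) (p 5) * bracket (p 0) (p 2) (p 3) (p 4) * bracket (p 1) (p 3) (p 4) (p 5)
            - bracket (p 0) (p 1) (p 2) (p 4) * bracket (p 2) (p 3) (p 4) (p 5) * bracket (p 0) (p 1) (p 3) (p 5) \<noteq> 0" and z: "QQ p c = 0"
  shows "c = 0"
proof -
  have E: "\<And>a b. qeval (QQ p c) (p a + p b) = 0" using z by (simp add: qeval_zero)
  have canon0: "bracket (p 0) (p 1) (p 5) (p 2) = - bracket (p 0) (p 1) (p 2) (p 5)"
      by (simp only: sw34[of "p 0" "p 1" "p 2" "p 5"] minus_minus)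
  have canon1: "bracket (p 0) (p 1) (p 5) (p 3) = - bracket (p 0) (p 1) (p 3) (p 5)"
      by (simp only: sw34[of "p 0" "p 1" "p 3" "p 5"] minus_minus)
  have canon2: "bracket (p 0) (p 1) (p 5) (p 4) = - bracket (p 0) (p 1) (p 4) (p 5)"
      by (simp only: sw34[of "p 0" "p 1" "p 4" "p 5"] minus_minus)
  have canon3: "bracket (p 0) (p 2) (p 1) (p 3) = - bracket (p 0) (p 1) (p 2) (p 3)"
      by (simp only: sw23[of "p 0" "p 1" "p 2" "p 3"] minus_minus)
  have canon4: "bracket (p 0) (p 2) (p 1) (p 4) = - bracket (p 0) (p 1) (p 2) (p 4)"
      by (simp only: sw23[of "p 0" "p 1" "p 2" "p 4"] minus_minus)
  have canon5: "bracket (p 0) (p 2) (p 1) (p 5) = - bracket (p 0) (p 1) (p 2) (p 5)"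
      by (simp only: sw23[of "p 0" "p 1" "p 2" "p 5"] minus_minus)
  have canon6: "bracket (p 0) (p 2) (p 4) (p 1) = bracket (p 0) (p 1) (p 2) (p 4)"
      by (simp only: sw34[of "p 0" "p 2" "p 1" "p 4"] sw23[of "p 0" "p 1" "p 2" "p 4"] minus_minus)
  have canon7: "bracket (p 0) (p 2) (p 4) (p 3) = - bracket (p 0) (p 2) (p 3) (p 4)"
      by (simp only: sw34[of "p 0" "p 2" "p 3" "p 4"] minus_minus)
  have canon8: "bracket (p 0) (p 3) (p 1) (p 2) = bracket (p 0) (p 1) (p 2) (p 3)"
      by (simp only: sw23[of "p 0" "p 1" "p 3" "p 2"] sw34[of "p 0" "p 1" "p 2" "p 3"] minus_minus)
  have canon9: "bracket (p 0) (p 3) (p 1) (p 4) = - bracket (p 0) (p 1) (p 3) (p 4)"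
      by (simp only: sw23[of "p 0" "p 1" "p 3" "p 4"] minus_minus)
  have canon10: "bracket (p 0) (p 3) (p 1) (p 5) = - bracket (p 0) (p 1) (p 3) (p 5)"
      by (simp only: sw23[of "p 0" "p 1" "p 3" "p 5"] minus_minus)
  have canon11: "bracket (p 0) (p 3) (p 2) (p 4) = - bracket (p 0) (p 2) (p 3) (p 4)"
      by (simp only: sw23[of "p 0" "p 2" "p 3" "p 4"] minus_minus)
  have canon12: "bracket (p 0) (p 3) (p 2) (p 5) = - bracket (p 0) (p 2) (p 3) (p 5)"
      by (simp only: sw23[of "p 0" "p 2" "p 3" "p 5"] minus_minus)
  have canon13: "bracket (p 0) (p 4) (p 1) (p 2) = bracket (p 0) (p 1) (p 2) (p 4)"
      by (simp only: sw23[of "p 0" "p 1" "p 4" "p 2"] sw34[of "p 0" "p 1" "p 2" "p 4"] minus_minus)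
  have canon14: "bracket (p 0) (p 4) (p 1) (p 3) = bracket (p 0) (p 1) (p 3) (p 4)"
      by (simp only: sw23[of "p 0" "p 1" "p 4" "p 3"] sw34[of "p 0" "p 1" "p 3" "p 4"] minus_minus)
  have canon15: "bracket (p 0) (p 4) (p 1) (p 5) = - bracket (p 0) (p 1) (p 4) (p 5)"
      by (simp only: sw23[of "p 0" "p 1" "p 4" "p 5"] minus_minus)
  have canon16: "bracket (p 0) (p 4) (p 2) (p 3) = bracket (p 0) (p 2) (p 3) (p 4)"
      by (simp only: sw23[of "p 0" "p 2" "p 4" "p 3"] sw34[of "p 0" "p 2" "p 3" "p 4"] minus_minus)
  have canon17: "bracket (p 0) (p 4) (p 2) (p 5) = - bracket (p 0) (p 2) (p 4) (p 5)"
      by (simp only: sw23[of "p 0" "p 2" "p 4" "p 5"] minus_minus)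
  have canon18: "bracket (p 0) (p 4) (p 3) (p 5) = - bracket (p 0) (p 3) (p 4) (p 5)"
      by (simp only: sw23[of "p 0" "p 3" "p 4" "p 5"] minus_minus)
  have canon19: "bracket (p 0) (p 4) (p 5) (p 1) = bracket (p 0) (p 1) (p 4) (p 5)"
      by (simp only: sw34[of "p 0" "p 4" "p 1" "p 5"] sw23[of "p 0" "p 1" "p 4" "p 5"] minus_minus)
  have canon20: "bracket (p 0) (p 4) (p 5) (p 2) = bracket (p 0) (p 2) (p 4) (p 5)"
      by (simp only: sw34[of "p 0" "p 4" "p 2" "p 5"] sw23[of "p 0" "p 2" "p 4" "p 5"] minus_minus)
  have canon21: "bracket (p 0) (p 4) (p 5) (p 3) = bracket (p 0) (p 3) (p 4) (p 5)"
      by (simp only: sw34[of "p 0" "p 4" "p 3" "p 5"] sw23[of "p 0" "p 3" "p 4" "p 5"] minus_minus)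
  have canon22: "bracket (p 0) (p 5) (p 1) (p 2) = bracket (p 0) (p 1) (p 2) (p 5)"
      by (simp only: sw23[of "p 0" "p 1" "p 5" "p 2"] sw34[of "p 0" "p 1" "p 2" "p 5"] minus_minus)
  have canon23: "bracket (p 0) (p 5) (p 1) (p 3) = bracket (p 0) (p 1) (p 3) (p 5)"
      by (simp only: sw23[of "p 0" "p 1" "p 5" "p 3"] sw34[of "p 0" "p 1" "p 3" "p 5"] minus_minus)
  have canon24: "bracket (p 0) (p 5) (p 1) (p 4) = bracket (p 0) (p 1) (p 4) (p 5)"
      by (simp only: sw23[of "p 0" "p 1" "p 5" "p 4"] sw34[of "p 0" "p 1" "p 4" "p 5"] minus_minus)
  have canon25: "bracket (p 0) (p 5) (p 2) (p 3) = bracket (p 0) (p 2) (p 3) (p 5)"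
      by (simp only: sw23[of "p 0" "p 2" "p 5" "p 3"] sw34[of "p 0" "p 2" "p 3" "p 5"] minus_minus)
  have canon26: "bracket (p 0) (p 5) (p 2) (p 4) = bracket (p 0) (p 2) (p 4) (p 5)"
      by (simp only: sw23[of "p 0" "p 2" "p 5" "p 4"] sw34[of "p 0" "p 2" "p 4" "p 5"] minus_minus)
  have canon27: "bracket (p 0) (p 5) (p 3) (p 4) = bracket (p 0) (p 3) (p 4) (p 5)"
      by (simp only: sw23[of "p 0" "p 3" "p 5" "p 4"] sw34[of "p 0" "p 3" "p 4" "p 5"] minus_minus)
  have canon28: "bracket (p 1) (p 2) (p 0) (p 3) = bracket (p 0) (p 1) (p 2) (p 3)"
      by (simp only: sw23[of "p 1" "p 0" "p 2" "p 3"] sw12[of "p 0" "p 1" "p 2" "p 3"] minus_minus)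
  have canon29: "bracket (p 1) (p 2) (p 0) (p 4) = bracket (p 0) (p 1) (p 2) (p 4)"
      by (simp only: sw23[of "p 1" "p 0" "p 2" "p 4"] sw12[of "p 0" "p 1" "p 2" "p 4"] minus_minus)
  have canon30: "bracket (p 1) (p 2) (p 0) (p 5) = bracket (p 0) (p 1) (p 2) (p 5)"
      by (simp only: sw23[of "p 1" "p 0" "p 2" "p 5"] sw12[of "p 0" "p 1" "p 2" "p 5"] minus_minus)
  have canon31: "bracket (p 1) (p 2) (p 3) (p 0) = - bracket (p 0) (p 1) (p 2) (p 3)"
      by (simp only: sw34[of "p 1" "p 2" "p 0" "p 3"] sw23[of "p 1" "p 0" "p 2" "p 3"] sw12[of "p 0" "p 1" "p 2" "p 3"] minus_minus)
  have canon32: "bracket (p 1) (p 3) (p 0) (p 2) = - bracket (p 0) (p 1) (p 2) (p 3)"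
      by (simp only: sw23[of "p 1" "p 0" "p 3" "p 2"] sw34[of "p 1" "p 0" "p 2" "p 3"] sw12[of "p 0" "p 1" "p 2" "p 3"] minus_minus)
  have canon33: "bracket (p 1) (p 3) (p 0) (p 4) = bracket (p 0) (p 1) (p 3) (p 4)"
      by (simp only: sw23[of "p 1" "p 0" "p 3" "p 4"] sw12[of "p 0" "p 1" "p 3" "p 4"] minus_minus)
  have canon34: "bracket (p 1) (p 3) (p 0) (p 5) = bracket (p 0) (p 1) (p 3) (p 5)"
      by (simp only: sw23[of "p 1" "p 0" "p 3" "p 5"] sw12[of "p 0" "p 1" "p 3" "p 5"] minus_minus)
  have canon35: "bracket (p 1) (p 3) (p 2) (p 4) = - bracket (p 1) (p 2) (p 3) (p 4)"
      by (simp only: sw23[of "p 1" "p 2" "p 3" "p 4"] minus_minus)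
  have canon36: "bracket (p 1) (p 3) (p 2) (p 5) = - bracket (p 1) (p 2) (p 3) (p 5)"
      by (simp only: sw23[of "p 1" "p 2" "p 3" "p 5"] minus_minus)
  have canon37: "bracket (p 1) (p 3) (p 5) (p 0) = - bracket (p 0) (p 1) (p 3) (p 5)"
      by (simp only: sw34[of "p 1" "p 3" "p 0" "p 5"] sw23[of "p 1" "p 0" "p 3" "p 5"] sw12[of "p 0" "p 1" "p 3" "p 5"] minus_minus)
  have canon38: "bracket (p 1) (p 3) (p 5) (p 2) = bracket (p 1) (p 2) (p 3) (p 5)"
      by (simp only: sw34[of "p 1" "p 3" "p 2" "p 5"] sw23[of "p 1" "p 2" "p 3" "p 5"] minus_minus)
  have canon39: "bracket (p 1) (p 3) (p 5) (p 4) = - bracket (p 1) (p 3) (p 4) (p 5)"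
      by (simp only: sw34[of "p 1" "p 3" "p 4" "p 5"] minus_minus)
  have canon40: "bracket (p 1) (p 4) (p 0) (p 2) = - bracket (p 0) (p 1) (p 2) (p 4)"
      by (simp only: sw23[of "p 1" "p 0" "p 4" "p 2"] sw34[of "p 1" "p 0" "p 2" "p 4"] sw12[of "p 0" "p 1" "p 2" "p 4"] minus_minus)
  have canon41: "bracket (p 1) (p 4) (p 0) (p 3) = - bracket (p 0) (p 1) (p 3) (p 4)"
      by (simp only: sw23[of "p 1" "p 0" "p 4" "p 3"] sw34[of "p 1" "p 0" "p 3" "p 4"] sw12[of "p 0" "p 1" "p 3" "p 4"] minus_minus)
  have canon42: "bracket (p 1) (p 4) (p 0) (p 5) = bracket (p 0) (p 1) (p 4) (p 5)"
      by (simp only: sw23[of "p 1" "p 0" "p 4" "p 5"] sw12[of "p 0" "p 1" "p 4" "p 5"] minus_minus)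
  have canon43: "bracket (p 1) (p 4) (p 2) (p 3) = bracket (p 1) (p 2) (p 3) (p 4)"
      by (simp only: sw23[of "p 1" "p 2" "p 4" "p 3"] sw34[of "p 1" "p 2" "p 3" "p 4"] minus_minus)
  have canon44: "bracket (p 1) (p 4) (p 2) (p 5) = - bracket (p 1) (p 2) (p 4) (p 5)"
      by (simp only: sw23[of "p 1" "p 2" "p 4" "p 5"] minus_minus)
  have canon45: "bracket (p 1) (p 4) (p 3) (p 5) = - bracket (p 1) (p 3) (p 4) (p 5)"
      by (simp only: sw23[of "p 1" "p 3" "p 4" "p 5"] minus_minus)
  have canon46: "bracket (p 1) (p 5) (p 0) (p 2) = - bracket (p 0) (p 1) (p 2) (p 5)"
      by (simp only: sw23[of "p 1" "p 0" "p 5" "p 2"] sw34[of "p 1" "p 0" "p 2" "p 5"] sw12[of "p 0" "p 1" "p 2" "p 5"] minus_minus)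
  have canon47: "bracket (p 1) (p 5) (p 0) (p 3) = - bracket (p 0) (p 1) (p 3) (p 5)"
      by (simp only: sw23[of "p 1" "p 0" "p 5" "p 3"] sw34[of "p 1" "p 0" "p 3" "p 5"] sw12[of "p 0" "p 1" "p 3" "p 5"] minus_minus)
  have canon48: "bracket (p 1) (p 5) (p 0) (p 4) = - bracket (p 0) (p 1) (p 4) (p 5)"
      by (simp only: sw23[of "p 1" "p 0" "p 5" "p 4"] sw34[of "p 1" "p 0" "p 4" "p 5"] sw12[of "p 0" "p 1" "p 4" "p 5"] minus_minus)
  have canon49: "bracket (p 1) (p 5) (p 2) (p 3) = bracket (p 1) (p 2) (p 3) (p 5)"
      by (simp only: sw23[of "p 1" "p 2" "p 5" "p 3"] sw34[of "p 1" "p 2" "p 3" "p 5"] minus_minus)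
  have canon50: "bracket (p 1) (p 5) (p 2) (p 4) = bracket (p 1) (p 2) (p 4) (p 5)"
      by (simp only: sw23[of "p 1" "p 2" "p 5" "p 4"] sw34[of "p 1" "p 2" "p 4" "p 5"] minus_minus)
  have canon51: "bracket (p 1) (p 5) (p 3) (p 4) = bracket (p 1) (p 3) (p 4) (p 5)"
      by (simp only: sw23[of "p 1" "p 3" "p 5" "p 4"] sw34[of "p 1" "p 3" "p 4" "p 5"] minus_minus)
  have canon52: "bracket (p 2) (p 3) (p 0) (p 1) = bracket (p 0) (p 1) (p 2) (p 3)"
      by (simp only: sw23[of "p 2" "p 0" "p 3" "p 1"] sw34[of "p 2" "p 0" "p 1" "p 3"] sw12[of "p 0" "p 2" "p 1" "p 3"] sw23[of "p 0" "p 1" "p 2" "p 3"] minus_minus)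
  have canon53: "bracket (p 2) (p 3) (p 0) (p 4) = bracket (p 0) (p 2) (p 3) (p 4)"
      by (simp only: sw23[of "p 2" "p 0" "p 3" "p 4"] sw12[of "p 0" "p 2" "p 3" "p 4"] minus_minus)
  have canon54: "bracket (p 2) (p 3) (p 0) (p 5) = bracket (p 0) (p 2) (p 3) (p 5)"
      by (simp only: sw23[of "p 2" "p 0" "p 3" "p 5"] sw12[of "p 0" "p 2" "p 3" "p 5"] minus_minus)
  have canon55: "bracket (p 2) (p 3) (p 1) (p 4) = bracket (p 1) (p 2) (p 3) (p 4)"
      by (simp only: sw23[of "p 2" "p 1" "p 3" "p 4"] sw12[of "p 1" "p 2" "p 3" "p 4"] minus_minus)
  have canon56: "bracket (p 2) (p 3) (p 1) (p 5) = bracket (p 1) (p 2) (p 3) (p 5)"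
      by (simp only: sw23[of "p 2" "p 1" "p 3" "p 5"] sw12[of "p 1" "p 2" "p 3" "p 5"] minus_minus)
  have canon57: "bracket (p 2) (p 3) (p 4) (p 0) = - bracket (p 0) (p 2) (p 3) (p 4)"
      by (simp only: sw34[of "p 2" "p 3" "p 0" "p 4"] sw23[of "p 2" "p 0" "p 3" "p 4"] sw12[of "p 0" "p 2" "p 3" "p 4"] minus_minus)
  have canon58: "bracket (p 2) (p 3) (p 4) (p 1) = - bracket (p 1) (p 2) (p 3) (p 4)"
      by (simp only: sw34[of "p 2" "p 3" "p 1" "p 4"] sw23[of "p 2" "p 1" "p 3" "p 4"] sw12[of "p 1" "p 2" "p 3" "p 4"] minus_minus)
  have canon59: "bracket (p 2) (p 4) (p 0) (p 1) = bracket (p 0) (p 1) (p 2) (p 4)"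
      by (simp only: sw23[of "p 2" "p 0" "p 4" "p 1"] sw34[of "p 2" "p 0" "p 1" "p 4"] sw12[of "p 0" "p 2" "p 1" "p 4"] sw23[of "p 0" "p 1" "p 2" "p 4"] minus_minus)
  have canon60: "bracket (p 2) (p 4) (p 0) (p 3) = - bracket (p 0) (p 2) (p 3) (p 4)"
      by (simp only: sw23[of "p 2" "p 0" "p 4" "p 3"] sw34[of "p 2" "p 0" "p 3" "p 4"] sw12[of "p 0" "p 2" "p 3" "p 4"] minus_minus)
  have canon61: "bracket (p 2) (p 4) (p 0) (p 5) = bracket (p 0) (p 2) (p 4) (p 5)"
      by (simp only: sw23[of "p 2" "p 0" "p 4" "p 5"] sw12[of "p 0" "p 2" "p 4" "p 5"] minus_minus)
  have canon62: "bracket (p 2) (p 4) (p 1) (p 3) = - bracket (p 1) (p 2) (p 3) (p 4)"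
      by (simp only: sw23[of "p 2" "p 1" "p 4" "p 3"] sw34[of "p 2" "p 1" "p 3" "p 4"] sw12[of "p 1" "p 2" "p 3" "p 4"] minus_minus)
  have canon63: "bracket (p 2) (p 4) (p 1) (p 5) = bracket (p 1) (p 2) (p 4) (p 5)"
      by (simp only: sw23[of "p 2" "p 1" "p 4" "p 5"] sw12[of "p 1" "p 2" "p 4" "p 5"] minus_minus)
  have canon64: "bracket (p 2) (p 4) (p 3) (p 5) = - bracket (p 2) (p 3) (p 4) (p 5)"
      by (simp only: sw23[of "p 2" "p 3" "p 4" "p 5"] minus_minus)
  have canon65: "bracket (p 2) (p 5) (p 0) (p 1) = bracket (p 0) (p 1) (p 2) (p 5)"
      by (simp only: sw23[of "p 2" "p 0" "p 5" "p 1"] sw34[of "p 2" "p 0" "p 1" "p 5"] sw12[of "p 0" "p 2" "p 1" "p 5"] sw23[of "p 0" "p 1" "p 2" "p 5"] minus_minus)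
  have canon66: "bracket (p 2) (p 5) (p 0) (p 3) = - bracket (p 0) (p 2) (p 3) (p 5)"
      by (simp only: sw23[of "p 2" "p 0" "p 5" "p 3"] sw34[of "p 2" "p 0" "p 3" "p 5"] sw12[of "p 0" "p 2" "p 3" "p 5"] minus_minus)
  have canon67: "bracket (p 2) (p 5) (p 0) (p 4) = - bracket (p 0) (p 2) (p 4) (p 5)"
      by (simp only: sw23[of "p 2" "p 0" "p 5" "p 4"] sw34[of "p 2" "p 0" "p 4" "p 5"] sw12[of "p 0" "p 2" "p 4" "p 5"] minus_minus)
  have canon68: "bracket (p 2) (p 5) (p 1) (p 3) = - bracket (p 1) (p 2) (p 3) (p 5)"
      by (simp only: sw23[of "p 2" "p 1" "p 5" "p 3"] sw34[of "p 2" "p 1" "p 3" "p 5"] sw12[of "p 1" "p 2" "p 3" "p 5"] minus_minus)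
  have canon69: "bracket (p 2) (p 5) (p 1) (p 4) = - bracket (p 1) (p 2) (p 4) (p 5)"
      by (simp only: sw23[of "p 2" "p 1" "p 5" "p 4"] sw34[of "p 2" "p 1" "p 4" "p 5"] sw12[of "p 1" "p 2" "p 4" "p 5"] minus_minus)
  have canon70: "bracket (p 2) (p 5) (p 3) (p 4) = bracket (p 2) (p 3) (p 4) (p 5)"
      by (simp only: sw23[of "p 2" "p 3" "p 5" "p 4"] sw34[of "p 2" "p 3" "p 4" "p 5"] minus_minus)
  have canon71: "bracket (p 3) (p 4) (p 0) (p 1) = bracket (p 0) (p 1) (p 3) (p 4)"
      by (simp only: sw23[of "p 3" "p 0" "p 4" "p 1"] sw34[of "p 3" "p 0" "p 1" "p 4"] sw12[of "p 0" "p 3" "p 1" "p 4"] sw23[of "p 0" "p 1" "p 3" "p 4"] minus_minus)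
  have canon72: "bracket (p 3) (p 4) (p 0) (p 2) = bracket (p 0) (p 2) (p 3) (p 4)"
      by (simp only: sw23[of "p 3" "p 0" "p 4" "p 2"] sw34[of "p 3" "p 0" "p 2" "p 4"] sw12[of "p 0" "p 3" "p 2" "p 4"] sw23[of "p 0" "p 2" "p 3" "p 4"] minus_minus)
  have canon73: "bracket (p 3) (p 4) (p 0) (p 5) = bracket (p 0) (p 3) (p 4) (p 5)"
      by (simp only: sw23[of "p 3" "p 0" "p 4" "p 5"] sw12[of "p 0" "p 3" "p 4" "p 5"] minus_minus)
  have canon74: "bracket (p 3) (p 4) (p 1) (p 2) = bracket (p 1) (p 2) (p 3) (p 4)"
      by (simp only: sw23[of "p 3" "p 1" "p 4" "p 2"] sw34[of "p 3" "p 1" "p 2" "p 4"] sw12[of "p 1" "p 3" "p 2" "p 4"] sw23[of "p 1" "p 2" "p 3" "p 4"] minus_minus)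
  have canon75: "bracket (p 3) (p 4) (p 1) (p 5) = bracket (p 1) (p 3) (p 4) (p 5)"
      by (simp only: sw23[of "p 3" "p 1" "p 4" "p 5"] sw12[of "p 1" "p 3" "p 4" "p 5"] minus_minus)
  have canon76: "bracket (p 3) (p 4) (p 2) (p 5) = bracket (p 2) (p 3) (p 4) (p 5)"
      by (simp only: sw23[of "p 3" "p 2" "p 4" "p 5"] sw12[of "p 2" "p 3" "p 4" "p 5"] minus_minus)
  have canon77: "bracket (p 3) (p 4) (p 5) (p 0) = - bracket (p 0) (p 3) (p 4) (p 5)"
      by (simp only: sw34[of "p 3" "p 4" "p 0" "p 5"] sw23[of "p 3" "p 0" "p 4" "p 5"] sw12[of "p 0" "p 3" "p 4" "p 5"] minus_minus)
  have canon78: "bracket (p 3) (p 4) (p 5) (p 1) = - bracket (p 1) (p 3) (p 4) (p 5)"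
      by (simp only: sw34[of "p 3" "p 4" "p 1" "p 5"] sw23[of "p 3" "p 1" "p 4" "p 5"] sw12[of "p 1" "p 3" "p 4" "p 5"] minus_minus)
  have canon79: "bracket (p 3) (p 4) (p 5) (p 2) = - bracket (p 2) (p 3) (p 4) (p 5)"
      by (simp only: sw34[of "p 3" "p 4" "p 2" "p 5"] sw23[of "p 3" "p 2" "p 4" "p 5"] sw12[of "p 2" "p 3" "p 4" "p 5"] minus_minus)
  have canon80: "bracket (p 3) (p 5) (p 0) (p 1) = bracket (p 0) (p 1) (p 3) (p 5)"
      by (simp only: sw23[of "p 3" "p 0" "p 5" "p 1"] sw34[of "p 3" "p 0" "p 1" "p 5"] sw12[of "p 0" "p 3" "p 1" "p 5"] sw23[of "p 0" "p 1" "p 3" "p 5"] minus_minus)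
  have canon81: "bracket (p 3) (p 5) (p 0) (p 2) = bracket (p 0) (p 2) (p 3) (p 5)"
      by (simp only: sw23[of "p 3" "p 0" "p 5" "p 2"] sw34[of "p 3" "p 0" "p 2" "p 5"] sw12[of "p 0" "p 3" "p 2" "p 5"] sw23[of "p 0" "p 2" "p 3" "p 5"] minus_minus)
  have canon82: "bracket (p 3) (p 5) (p 0) (p 4) = - bracket (p 0) (p 3) (p 4) (p 5)"
      by (simp only: sw23[of "p 3" "p 0" "p 5" "p 4"] sw34[of "p 3" "p 0" "p 4" "p 5"] sw12[of "p 0" "p 3" "p 4" "p 5"] minus_minus)
  have canon83: "bracket (p 3) (p 5) (p 1) (p 2) = bracket (p 1) (p 2) (p 3) (p 5)"
      by (simp only: sw23[of "p 3" "p 1" "p 5" "p 2"] sw34[of "p 3" "p 1" "p 2" "p 5"] sw12[of "p 1" "p 3" "p 2" "p 5"] sw23[of "p 1" "p 2" "p 3" "p 5"] minus_minus)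
  have canon84: "bracket (p 3) (p 5) (p 1) (p 4) = - bracket (p 1) (p 3) (p 4) (p 5)"
      by (simp only: sw23[of "p 3" "p 1" "p 5" "p 4"] sw34[of "p 3" "p 1" "p 4" "p 5"] sw12[of "p 1" "p 3" "p 4" "p 5"] minus_minus)
  have canon85: "bracket (p 3) (p 5) (p 2) (p 4) = - bracket (p 2) (p 3) (p 4) (p 5)"
      by (simp only: sw23[of "p 3" "p 2" "p 5" "p 4"] sw34[of "p 3" "p 2" "p 4" "p 5"] sw12[of "p 2" "p 3" "p 4" "p 5"] minus_minus)
  have canon86: "bracket (p 4) (p 5) (p 0) (p 1) = bracket (p 0) (p 1) (p 4) (p 5)"
      by (simp only: sw23[of "p 4" "p 0" "p 5" "p 1"] sw34[of "p 4" "p 0" "p 1" "p 5"] sw12[of "p 0" "p 4" "p 1" "p 5"] sw23[of "p 0" "p 1" "p 4" "p 5"] minus_minus)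
  have canon87: "bracket (p 4) (p 5) (p 0) (p 2) = bracket (p 0) (p 2) (p 4) (p 5)"
      by (simp only: sw23[of "p 4" "p 0" "p 5" "p 2"] sw34[of "p 4" "p 0" "p 2" "p 5"] sw12[of "p 0" "p 4" "p 2" "p 5"] sw23[of "p 0" "p 2" "p 4" "p 5"] minus_minus)
  have canon88: "bracket (p 4) (p 5) (p 0) (p 3) = bracket (p 0) (p 3) (p 4) (p 5)"
      by (simp only: sw23[of "p 4" "p 0" "p 5" "p 3"] sw34[of "p 4" "p 0" "p 3" "p 5"] sw12[of "p 0" "p 4" "p 3" "p 5"] sw23[of "p 0" "p 3" "p 4" "p 5"] minus_minus)
  have canon89: "bracket (p 4) (p 5) (p 1) (p 2) = bracket (p 1) (p 2) (p 4) (p 5)"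
      by (simp only: sw23[of "p 4" "p 1" "p 5" "p 2"] sw34[of "p 4" "p 1" "p 2" "p 5"] sw12[of "p 1" "p 4" "p 2" "p 5"] sw23[of "p 1" "p 2" "p 4" "p 5"] minus_minus)
  have canon90: "bracket (p 4) (p 5) (p 1) (p 3) = bracket (p 1) (p 3) (p 4) (p 5)"
      by (simp only: sw23[of "p 4" "p 1" "p 5" "p 3"] sw34[of "p 4" "p 1" "p 3" "p 5"] sw12[of "p 1" "p 4" "p 3" "p 5"] sw23[of "p 1" "p 3" "p 4" "p 5"] minus_minus)
  have canon91: "bracket (p 4) (p 5) (p 2) (p 3) = bracket (p 2) (p 3) (p 4) (p 5)"
      by (simp only: sw23[of "p 4" "p 2" "p 5" "p 3"] sw34[of "p 4" "p 2" "p 3" "p 5"] sw12[of "p 2" "p 4" "p 3" "p 5"] sw23[of "p 2" "p 3" "p 4" "p 5"] minus_minus)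
  note canon = canon0 canon1 canon2 canon3 canon4 canon5 canon6 canon7 canon8 canon9 canon10 canon11 canon12 canon13 canon14 canon15 canon16 canon17 canon18 canon19 canon20 canon21 canon22 canon23 canon24 canon25 canon26 canon27 canon28 canon29 canon30 canon31 canon32 canon33 canon34 canon35 canon36 canon37 canon38 canon39 canon40 canon41 canon42 canon43 canon44 canon45 canon46 canon47 canon48 canon49 canon50 canon51 canon52 canon53 canon54 canon55 canon56 canon57 canon58 canon59 canon60 canon61 canon62 canon63 canon64 canon65 canon66 canon67 canon68 canon69 canon70 canon71 canon72 canon73 canon74 canon75 canon76 canon77 canon78 canon79 canon80 canon81 canon82 canon83 canon84 canon85 canon86 canon87 canon88 canon89 canon90 canon91
  have r0: "- bracket (p 0) (p 1) (p 2) (p 3)*bracket (p 0) (p 1) (p 4) (p 5)*c$4 - bracket (p 0) (p 1) (p 2) (p 4)*bracket (p 0) (p 1) (p 3) (p 5)*c$3 = 0"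
    using E[of 0 1] by ((simp only: qeval_QQ br_add br_zero canon)?, algebra)
  have r1: "- bracket (p 0) (p 1) (p 2) (p 3)*bracket (p 0) (p 2) (p 4) (p 5)*c$4 + bracket (p 0) (p 1) (p 2) (p 5)*bracket (p 0) (p 2) (p 3) (p 4)*c$1 = 0"
    using E[of 0 2] by ((simp only: qeval_QQ br_add br_zero canon)?, algebra)
  have r2: "- bracket (p 0) (p 1) (p 2) (p 3)*bracket (p 0) (p 3) (p 4) (p 5)*c$2 - bracket (p 0) (p 1) (p 2) (p 3)*bracket (p 0) (p 3) (p 4) (p 5)*c$4 + bracket (p 0) (p 1) (p 3) (p 5)*bracket (p 0) (p 2) (p 3) (p 4)*c$1 + bracket (p 0) (p 1) (p 3) (p 5)*bracket (p 0) (p 2) (p 3) (p 4)*c$3 = 0"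
    using E[of 0 3] by ((simp only: qeval_QQ br_add br_zero canon)?, algebra)
  have r3: "- bracket (p 0) (p 1) (p 2) (p 4)*bracket (p 0) (p 3) (p 4) (p 5)*c$2 + bracket (p 0) (p 1) (p 4) (p 5)*bracket (p 0) (p 2) (p 3) (p 4)*c$1 = 0"
    using E[of 0 4] by ((simp only: qeval_QQ br_add br_zero canon)?, algebra)
  have r4: "- bracket (p 0) (p 1) (p 2) (p 5)*bracket (p 0) (p 3) (p 4) (p 5)*c$2 - bracket (p 0) (p 1) (p 3) (p 5)*bracket (p 0) (p 2) (p 4) (p 5)*c$3 = 0"
    using E[of 0 5] by ((simp only: qeval_QQ br_add br_zero canon)?, algebra)
  have r5: "bracket (p 0) (p 1) (p 2) (p 4)*bracket (p 1) (p 2) (p 3) (p 5)*c$3 + bracket (p 0) (p 1) (p 2) (p 5)*bracket (p 1) (p 2) (p 3) (p 4)*c$1 = 0"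
    using E[of 1 2] by ((simp only: qeval_QQ br_add br_zero canon)?, algebra)
  have r6: "- bracket (p 0) (p 1) (p 2) (p 3)*bracket (p 1) (p 3) (p 4) (p 5)*c$2 + bracket (p 0) (p 1) (p 3) (p 5)*bracket (p 1) (p 2) (p 3) (p 4)*c$1 = 0"
    using E[of 1 3] by ((simp only: qeval_QQ br_add br_zero canon)?, algebra)
  have r7: "- bracket (p 0) (p 1) (p 2) (p 4)*bracket (p 1) (p 3) (p 4) (p 5)*c$2 - bracket (p 0) (p 1) (p 2) (p 4)*bracket (p 1) (p 3) (p 4) (p 5)*c$3 + bracket (p 0) (p 1) (p 4) (p 5)*bracket (p 1) (p 2) (p 3) (p 4)*c$1 + bracket (p 0) (p 1) (p 4) (p 5)*bracket (p 1) (p 2) (p 3) (p 4)*c$4 = 0"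
    using E[of 1 4] by ((simp only: qeval_QQ br_add br_zero canon)?, algebra)
  have r8: "- bracket (p 0) (p 1) (p 2) (p 5)*bracket (p 1) (p 3) (p 4) (p 5)*c$2 + bracket (p 0) (p 1) (p 4) (p 5)*bracket (p 1) (p 2) (p 3) (p 5)*c$4 = 0"
    using E[of 1 5] by ((simp only: qeval_QQ br_add br_zero canon)?, algebra)
  have r9: "- bracket (p 0) (p 1) (p 2) (p 3)*bracket (p 2) (p 3) (p 4) (p 5)*c$2 - bracket (p 0) (p 2) (p 3) (p 4)*bracket (p 1) (p 2) (p 3) (p 5)*c$3 = 0"
    using E[of 2 3] by ((simp only: qeval_QQ br_add br_zero canon)?, algebra)
  have r10: "- bracket (p 0) (p 1) (p 2) (p 4)*bracket (p 2) (p 3) (p 4) (p 5)*c$2 + bracket (p 0) (p 2) (p 4) (p 5)*bracket (p 1) (p 2) (p 3) (p 4)*c$4 = 0"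
    using E[of 2 4] by ((simp only: qeval_QQ br_add br_zero canon)?, algebra)
  have r11: "- bracket (p 0) (p 1) (p 2) (p 5)*bracket (p 2) (p 3) (p 4) (p 5)*c$1 - bracket (p 0) (p 1) (p 2) (p 5)*bracket (p 2) (p 3) (p 4) (p 5)*c$2 + bracket (p 0) (p 2) (p 4) (p 5)*bracket (p 1) (p 2) (p 3) (p 5)*c$3 + bracket (p 0) (p 2) (p 4) (p 5)*bracket (p 1) (p 2) (p 3) (p 5)*c$4 = 0"
    using E[of 2 5] by ((simp only: qeval_QQ br_add br_zero canon)?, algebra)
  have r12: "bracket (p 0) (p 2) (p 3) (p 4)*bracket (p 1) (p 3) (p 4) (p 5)*c$3 + bracket (p 0) (p 3) (p 4) (p 5)*bracket (p 1) (p 2) (p 3) (p 4)*c$4 = 0"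
    using E[of 3 4] by ((simp only: qeval_QQ br_add br_zero canon)?, algebra)
  have r13: "- bracket (p 0) (p 1) (p 3) (p 5)*bracket (p 2) (p 3) (p 4) (p 5)*c$1 + bracket (p 0) (p 3) (p 4) (p 5)*bracket (p 1) (p 2) (p 3) (p 5)*c$4 = 0"
    using E[of 3 5] by ((simp only: qeval_QQ br_add br_zero canon)?, algebra)
  have r14: "- bracket (p 0) (p 1) (p 4) (p 5)*bracket (p 2) (p 3) (p 4) (p 5)*c$1 - bracket (p 0) (p 2) (p 4) (p 5)*bracket (p 1) (p 3) (p 4) (p 5)*c$3 = 0"
    using E[of 4 5] by ((simp only: qeval_QQ br_add br_zero canon)?, algebra)
  have pl0: "bracket (p 0) (p 1) (p 2) (p 3)*bracket (p 0) (p 1) (p 4) (p 5) - bracket (p 0) (p 1) (p 2) (p 4)*bracket (p 0) (p 1) (p 3) (p 5) + bracket (p 0) (p 1) (p 2) (p 5)*bracket (p 0) (p 1) (p 3) (p 4) = 0"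
    using GP[of "p 0" "p 1" "p 2" "p 3" "p 4" "p 5"] by ((simp only: canon)?; (assumption | algebra))
  have pl1: "- bracket (p 0) (p 1) (p 2) (p 3)*bracket (p 0) (p 2) (p 4) (p 5) + bracket (p 0) (p 1) (p 2) (p 4)*bracket (p 0) (p 2) (p 3) (p 5) - bracket (p 0) (p 1) (p 2) (p 5)*bracket (p 0) (p 2) (p 3) (p 4) = 0"
    using GP[of "p 0" "p 2" "p 1" "p 3" "p 4" "p 5"] by ((simp only: canon)?; (assumption | algebra))
  have pl2: "bracket (p 0) (p 1) (p 2) (p 3)*bracket (p 0) (p 3) (p 4) (p 5) - bracket (p 0) (p 1) (p 3) (p 4)*bracket (p 0) (p 2) (p 3) (p 5) + bracket (p 0) (p 1) (p 3) (p 5)*bracket (p 0) (p 2) (p 3) (p 4) = 0"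
    using GP[of "p 0" "p 3" "p 1" "p 2" "p 4" "p 5"] by ((simp only: canon)?; (assumption | algebra))
  have pl3: "- bracket (p 0) (p 1) (p 2) (p 4)*bracket (p 0) (p 3) (p 4) (p 5) + bracket (p 0) (p 1) (p 3) (p 4)*bracket (p 0) (p 2) (p 4) (p 5) - bracket (p 0) (p 1) (p 4) (p 5)*bracket (p 0) (p 2) (p 3) (p 4) = 0"
    using GP[of "p 0" "p 4" "p 1" "p 2" "p 3" "p 5"] by ((simp only: canon)?; (assumption | algebra))
  have pl4: "bracket (p 0) (p 1) (p 2) (p 5)*bracket (p 0) (p 3) (p 4) (p 5) - bracket (p 0) (p 1) (p 3) (p 5)*bracket (p 0) (p 2) (p 4) (p 5) + bracket (p 0) (p 1) (p 4) (p 5)*bracket (p 0) (p 2) (p 3) (p 5) = 0"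
    using GP[of "p 0" "p 5" "p 1" "p 2" "p 3" "p 4"] by ((simp only: canon)?; (assumption | algebra))
  have pl5: "bracket (p 0) (p 1) (p 2) (p 3)*bracket (p 1) (p 2) (p 4) (p 5) - bracket (p 0) (p 1) (p 2) (p 4)*bracket (p 1) (p 2) (p 3) (p 5) + bracket (p 0) (p 1) (p 2) (p 5)*bracket (p 1) (p 2) (p 3) (p 4) = 0"
    using GP[of "p 1" "p 2" "p 0" "p 3" "p 4" "p 5"] by ((simp only: canon)?; (assumption | algebra))
  have pl6: "- bracket (p 0) (p 1) (p 2) (p 3)*bracket (p 1) (p 3) (p 4) (p 5) + bracket (p 0) (p 1) (p 3) (p 4)*bracket (p 1) (p 2) (p 3) (p 5) - bracket (p 0) (p 1) (p 3) (p 5)*bracket (p 1) (p 2) (p 3) (p 4) = 0"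
    using GP[of "p 1" "p 3" "p 0" "p 2" "p 4" "p 5"] by ((simp only: canon)?; (assumption | algebra))
  have pl7: "bracket (p 0) (p 1) (p 2) (p 4)*bracket (p 1) (p 3) (p 4) (p 5) - bracket (p 0) (p 1) (p 3) (p 4)*bracket (p 1) (p 2) (p 4) (p 5) + bracket (p 0) (p 1) (p 4) (p 5)*bracket (p 1) (p 2) (p 3) (p 4) = 0"
    using GP[of "p 1" "p 4" "p 0" "p 2" "p 3" "p 5"] by ((simp only: canon)?; (assumption | algebra))
  have pl8: "- bracket (p 0) (p 1) (p 2) (p 5)*bracket (p 1) (p 3) (p 4) (p 5) + bracket (p 0) (p 1) (p 3) (p 5)*bracket (p 1) (p 2) (p 4) (p 5) - bracket (p 0) (p 1) (p 4) (p 5)*bracket (p 1) (p 2) (p 3) (p 5) = 0"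
    using GP[of "p 1" "p 5" "p 0" "p 2" "p 3" "p 4"] by ((simp only: canon)?; (assumption | algebra))
  have pl9: "bracket (p 0) (p 1) (p 2) (p 3)*bracket (p 2) (p 3) (p 4) (p 5) - bracket (p 0) (p 2) (p 3) (p 4)*bracket (p 1) (p 2) (p 3) (p 5) + bracket (p 0) (p 2) (p 3) (p 5)*bracket (p 1) (p 2) (p 3) (p 4) = 0"
    using GP[of "p 2" "p 3" "p 0" "p 1" "p 4" "p 5"] by ((simp only: canon)?; (assumption | algebra))
  have pl10: "- bracket (p 0) (p 1) (p 2) (p 4)*bracket (p 2) (p 3) (p 4) (p 5) + bracket (p 0) (p 2) (p 3) (p 4)*bracket (p 1) (p 2) (p 4) (p 5) - bracket (p 0) (p 2) (p 4) (p 5)*bracket (p 1) (p 2) (p 3) (p 4) = 0"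
    using GP[of "p 2" "p 4" "p 0" "p 1" "p 3" "p 5"] by ((simp only: canon)?; (assumption | algebra))
  have pl11: "bracket (p 0) (p 1) (p 2) (p 5)*bracket (p 2) (p 3) (p 4) (p 5) - bracket (p 0) (p 2) (p 3) (p 5)*bracket (p 1) (p 2) (p 4) (p 5) + bracket (p 0) (p 2) (p 4) (p 5)*bracket (p 1) (p 2) (p 3) (p 5) = 0"
    using GP[of "p 2" "p 5" "p 0" "p 1" "p 3" "p 4"] by ((simp only: canon)?; (assumption | algebra))
  have pl12: "bracket (p 0) (p 1) (p 3) (p 4)*bracket (p 2) (p 3) (p 4) (p 5) - bracket (p 0) (p 2) (p 3) (p 4)*bracket (p 1) (p 3) (p 4) (p 5) + bracket (p 0) (p 3) (p 4) (p 5)*bracket (p 1) (p 2) (p 3) (p 4) = 0"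
    using GP[of "p 3" "p 4" "p 0" "p 1" "p 2" "p 5"] by ((simp only: canon)?; (assumption | algebra))
  have pl13: "- bracket (p 0) (p 1) (p 3) (p 5)*bracket (p 2) (p 3) (p 4) (p 5) + bracket (p 0) (p 2) (p 3) (p 5)*bracket (p 1) (p 3) (p 4) (p 5) - bracket (p 0) (p 3) (p 4) (p 5)*bracket (p 1) (p 2) (p 3) (p 5) = 0"
    using GP[of "p 3" "p 5" "p 0" "p 1" "p 2" "p 4"] by ((simp only: canon)?; (assumption | algebra))
  have pl14: "bracket (p 0) (p 1) (p 4) (p 5)*bracket (p 2) (p 3) (p 4) (p 5) - bracket (p 0) (p 2) (p 4) (p 5)*bracket (p 1) (p 3) (p 4) (p 5) + bracket (p 0) (p 3) (p 4) (p 5)*bracket (p 1) (p 2) (p 4) (p 5) = 0"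
    using GP[of "p 4" "p 5" "p 0" "p 1" "p 2" "p 3"] by ((simp only: canon)?; (assumption | algebra))
  have "c$1 = 0 \<and> c$2 = 0 \<and> c$3 = 0 \<and> c$4 = 0"
    by (rule cert[OF r0 r1 r2 r3 r4 r5 r6 r7 r8 r9 r10 r11 r12 r13 r14 pl0 pl1 pl2 pl3 pl4 pl5 pl6 pl7 pl8 pl9 pl10 pl11 pl12 pl13 pl14 gen])
  then show ?thesis by (simp add: vec_eq_iff forall_4)
qed


lemma QQ_vec: "QQ p (vector [a,b,c,d]) = (\<chi> i j. a * Q1 p$i$j + b * Q2 p$i$j + c * Q3 p$i$j + d * Q4 p$i$j)"
  by (simp add: QQ_def)

lemma matM_row:
  "(matM p *v c) $ 1 = qeval (QQ p c) (p 6)"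
  "(matM p *v c) $ 2 = qeval (QQ p c) (p 7)"
  "(matM p *v c) $ 3 = qeval (QQ p c) (p 8)"
  "(matM p *v c) $ 4 = qeval (QQ p c) (p 9)"
  by (simp_all add: matrix_vector_mult_def matM_def mrow_def sum_4 qeval_QQ algebra_simps)

lemma Q_low: "k \<le> 5 \<Longrightarrow> qeval (Q1 p) (p k) = 0 \<and> qeval (Q2 p) (p k) = 0 \<and> qeval (Q3 p) (p k) = 0 \<and> qeval (Q4 p) (p k) = 0"
proof -
  assume "k \<le> 5"
  then have "k = 0 \<or> k = 1 \<or> k = 2 \<or> k = 3 \<or> k = 4 \<or> k = 5" by auto
  then show ?thesis by (elim disjE) (simp_all add: qeval_Q1 qeval_Q2 qeval_Q3 qeval_Q4)
qed

lemma QQ_low: "k \<le> 5 \<Longrightarrow> qeval (QQ p c) (p k) = 0"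
proof -
  assume "k \<le> 5"
  then have "k = 0 \<or> k = 1 \<or> k = 2 \<or> k = 3 \<or> k = 4 \<or> k = 5" by auto
  then show ?thesis by (elim disjE) (simp_all add: qeval_QQ)
qed

theorem mainTheorem6:
  fixes p :: "nat \<Rightarrow> complex^4"
  assumes nz: "\<And>k. k \<le> 9 \<Longrightarrow> p k \<noteq> 0"
    and dim4: "vector_space.dim qscale (quads_through (p ` {0..5})) = 4"
    and gen: "bracket (p 0) (p 1) (p 2) (p 5) * bracket (p 0) (p 2) (p 3) (p 4) * bracket (p 1) (p 3) (p 4) (p 5)
            - bracket (p 0) (p 1) (p 2) (p 4) * bracket (p 2) (p 3) (p 4) (p 5) * bracket (p 0) (p 1) (p 3) (p 5) \<noteq> 0"
  shows "on_common_quadric (p ` {0..9}) \<longleftrightarrow> det (matM p) = 0"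
proof -
  interpret V: vector_space qscale
    by unfold_locales (simp_all add: qscale_def vec_eq_iff algebra_simps)
  have ind: "\<And>c. QQ p c = 0 \<Longrightarrow> c = 0" using QQ_indep[OF gen] .
  have QQ0: "QQ p 0 = 0" by (simp add: QQ_def vec_eq_iff)
  show ?thesis
  proof
    assume "on_common_quadric (p ` {0..9})"
    then obtain q i j where qin: "q \<in> quads_through (p ` {0..9})" and "i \<le> j" "q$i$j \<noteq> 0"
      unfolding on_common_quadric_def by blast
    hence qnz: "q \<noteq> 0" by auto
    let ?W = "quads_through (p ` {0..5})"
    have qW: "q \<in> ?W" using qin by (auto simp: quads_through_def)
    have d12: "Q1 p \<noteq> Q2 p"
    proof
      assume "Q1 p = Q2 p"
      then have "QQ p (vector [1,-1,0,0]) = 0" by (simp add: QQ_vec vec_eq_iff)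
      then have "vector [1,-1,0,0] = (0::complex^4)" by (rule ind)
      then show False by (simp add: vec_eq_iff forall_4)
    qed
    have d13: "Q1 p \<noteq> Q3 p"
    proof
      assume "Q1 p = Q3 p"
      then have "QQ p (vector [1,0,-1,0]) = 0" by (simp add: QQ_vec vec_eq_iff)
      then have "vector [1,0,-1,0] = (0::complex^4)" by (rule ind)
      then show False by (simp add: vec_eq_iff forall_4)
    qed
    have d14: "Q1 p \<noteq> Q4 p"
    proof
      assume "Q1 p = Q4 p"
      then have "QQ p (vector [1,0,0,-1]) = 0" by (simp add: QQ_vec vec_eq_iff)
      then have "vector [1,0,0,-1] = (0::complex^4)" by (rule ind)
      then show False by (simp add: vec_eq_iff forall_4)
    qed
    have d23: "Q2 p \<noteq> Q3 p"
    proof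
      assume "Q2 p = Q3 p"
      then have "QQ p (vector [0,1,-1,0]) = 0" by (simp add: QQ_vec vec_eq_iff)
      then have "vector [0,1,-1,0] = (0::complex^4)" by (rule ind)
      then show False by (simp add: vec_eq_iff forall_4)
    qed
    have d24: "Q2 p \<noteq> Q4 p"
    proof
      assume "Q2 p = Q4 p"
      then have "QQ p (vector [0,1,0,-1]) = 0" by (simp add: QQ_vec vec_eq_iff)
      then have "vector [0,1,0,-1] = (0::complex^4)" by (rule ind)
      then show False by (simp add: vec_eq_iff forall_4)
    qed
    have d34: "Q3 p \<noteq> Q4 p"
    proof
      assume "Q3 p = Q4 p"
      then have "QQ p (vector [0,0,1,-1]) = 0" by (simp add: QQ_vec vec_eq_iff)
      then have "vector [0,0,1,-1] = (0::complex^4)" by (rule ind)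
      then show False by (simp add: vec_eq_iff forall_4)
    qed
    define S where "S = {Q1 p, Q2 p, Q3 p, Q4 p}"
    have sumS: "(\<Sum>v\<in>S. qscale (u v) v) = QQ p (vector [u (Q1 p), u (Q2 p), u (Q3 p), u (Q4 p)])" for u
      using d12 d13 d14 d23 d24 d34 by (simp add: S_def QQ_vec qscale_def vec_eq_iff)
    have finS: "finite S" by (simp add: S_def)
    have cardS: "card S = 4" using d12 d13 d14 d23 d24 d34 by (simp add: S_def)
    have indS: "V.independent S"
    proof
      assume "V.dependent S"
      then obtain u where u: "\<exists>v\<in>S. u v \<noteq> 0" "(\<Sum>v\<in>S. qscale (u v) v) = 0"
        unfolding V.dependent_finite[OF finS] by blast
      have "vector [u (Q1 p), u (Q2 p), u (Q3 p), u (Q4 p)] = (0::complex^4)"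
        using u(2) sumS ind by metis
      then have "u (Q1 p) = 0" "u (Q2 p) = 0" "u (Q3 p) = 0" "u (Q4 p) = 0"
        by (simp_all add: vec_eq_iff forall_4)
      then show False using u(1) by (auto simp: S_def)
    qed
    have SW: "S \<subseteq> ?W"
      using Q_low by (auto simp: S_def quads_through_def qcoeff_qprod Q1_def Q2_def Q3_def Q4_def)
    have "q \<in> V.span S"
    proof (rule ccontr)
      assume nq: "q \<notin> V.span S"
      have ind2: "V.independent (insert q S)" by (rule V.independent_insertI[OF nq indS])
      obtain B where B: "B \<subseteq> ?W" "V.independent B" "?W \<subseteq> V.span B" "card B = V.dim ?W"
        by (rule V.basis_exists)
      have fB: "finite B" using B(4) dim4 card.infinite by fastforce
      have "insert q S \<subseteq> V.span B" using B(3) qW SW by auto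
      from V.independent_span_bound[OF fB ind2 this] have "card (insert q S) \<le> card B" by simp
      moreover have "q \<notin> S" using nq V.span_base by blast
      ultimately show False using cardS B(4) dim4 finS by simp
    qed
    then obtain u where "q = (\<Sum>v\<in>S. qscale (u v) v)" using V.span_finite[OF finS] by auto
    then have qQQ: "q = QQ p (vector [u (Q1 p), u (Q2 p), u (Q3 p), u (Q4 p)])" using sumS by simp
    define c :: "complex^4" where "c = vector [u (Q1 p), u (Q2 p), u (Q3 p), u (Q4 p)]"
    have qc: "q = QQ p c" using qQQ c_def by simp
    have cnz: "c \<noteq> 0" using qnz QQ0 qc by auto
    have van: "qeval q (p k) = 0" if "k \<in> {6..9}" for k using qin that by (auto simp: quads_through_def)
    have "matM p *v c = 0"
      unfolding vec_eq_iff forall_4 using matM_row[of p c] van[of 6] van[of 7] van[of 8] van[of 9] qc by simp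
    then show "det (matM p) = 0" using det0_iff cnz by blast
  next
    assume "det (matM p) = 0"
    then obtain c where c: "c \<noteq> 0" "matM p *v c = 0" using det0_iff by blast
    have van: "qeval (QQ p c) (p k) = 0" if "k \<le> 9" for k
    proof -
      have "k \<le> 5 \<or> k = 6 \<or> k = 7 \<or> k = 8 \<or> k = 9" using that by auto
      then show ?thesis using QQ_low matM_row[of p c] c(2) by auto
    qed
    have "QQ p c \<noteq> 0" using ind c by blast
    then obtain i j where ij: "QQ p c $ i $ j \<noteq> 0" by (auto simp: vec_eq_iff)
    then have "i \<le> j" using qcoeff_QQ unfolding is_qcoeff_def by blast
    have "QQ p c \<in> quads_through (p ` {0..9})" using qcoeff_QQ van by (auto simp: quads_through_def)
    then show "on_common_quadric (p ` {0..9})"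
      unfolding on_common_quadric_def using \<open>i \<le> j\<close> ij by blast
  qed
qed

end
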